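(* For the public-key scheme $\mathsf{FrodoPKE}$ with secret key $\mathbf S\in\mathbb Z_q^{n\times\bar n}$, there exists a quantum algorithm that makes one quantum query to $\mathsf{FrodoPKE}.\mathsf{Dec}_{\mathbf S}$ and recovers any choice of $\bar m$ of the $\bar n$ columns of $\mathbf S$. For each of the chosen columns, if that column has at least one odd entry, then the algorithm succeeds in recovering that column with probability at least $4/\pi^2$.
   Context: $\mathsf{FrodoPKE}$ with integer parameters $n,\bar m,\bar n$, modulus $q\ge2$ a power of $2$, number $B$ of encoded bits per entry, and discrete symmetric error distribution $\chi$: $\mathsf{KeyGen}$ samples uniform $\mathbf A\in\mathbb Z_q^{n\times n}$ and $\mathbf S,\mathbf E\leftarrow\chi$ in $\mathbb Z_q^{n\times\bar n}$, sets $\mathbf B=\mathbf A\mathbf S+\mathbf E$, public key $(\mathbf A,\mathbf B)$, secret key $\mathbf S$. Encryption of $\mathbf m\in\{0,1\}^{B\bar m\bar n}$, encoded as $\mathbf M\in\mathbb Z_q^{\bar m\times\bar n}$ whose entries are zero outside their $B$ most significant bits, samples $\mathbf S',\mathbf E'\leftarrow\chi$ in $\mathbb Z_q^{\bar m\times n}$, $\mathbf E''\leftarrow\chi$ in $\mathbb Z_q^{\bar m\times\bar n}$ and outputs $(\mathbf C_1,\mathbf C_2)=(\mathbf S'\mathbf A+\mathbf E',\mathbf M+\mathbf S'\mathbf B+\mathbf E'')$. $\mathsf{Dec}_{\mathbf S}(\mathbf C_1,\mathbf C_2)$ for $(\mathbf C_1,\mathbf C_2)\in\mathbb Z_q^{\bar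 m\times n}\times\mathbb Z_q^{\bar m\times\bar n}$ computes $\mathbf M=\mathbf C_2-\mathbf C_1\mathbf S$ and outputs, for each $(i,j)\in[\bar m]\times[\bar n]$, the integer in $\mathbb Z_{2^B}$ given by the $B$ most significant bits of $M_{i,j}$. A quantum query to $\mathsf{Dec}_{\mathbf S}$ means one application, on arbitrary superpositions of ciphertexts, of the unitary that maps $|\mathbf C_1,\mathbf C_2\rangle\bigotimes_{i,j}|z_{i,j}\rangle$ ($z_{i,j}\in\mathbb Z_{2^B}$) to $|\mathbf C_1,\mathbf C_2\rangle\bigotimes_{i,j}|z_{i,j}+\mathsf{Dec}_{\mathbf S}(\mathbf C_1,\mathbf C_2)_{i,j}\bmod 2^B\rangle$. *)

theory Defs
  imports Complex_Main
begin

text \<open>Matrices over Z_q are represented extensionally as functions nat => nat => int,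
  with entries in 0..q-1 inside the index range r x c and 0 outside.\<close>

type_synonym zmat = "nat \<Rightarrow> nat \<Rightarrow> int"

definition zmats :: "nat \<Rightarrow> nat \<Rightarrow> nat \<Rightarrow> zmat set" where
  "zmats r c q = {M. \<forall>i j. (i < r \<and> j < c \<longrightarrow> 0 \<le> M i j \<and> M i j < int q)
                        \<and> (\<not> (i < r \<and> j < c) \<longrightarrow> M i j = 0)}"

text \<open>FrodoPKE decryption: M = C2 - C1 S mod q, then the B most significant bits
  of each entry (q = 2^D, so these are M_ij div 2^(D-B) = M_ij div (q div 2^B)).\<close>

definition frodo_dec :: "nat \<Rightarrow> nat \<Rightarrow> nat \<Rightarrow> zmat \<Rightarrow> zmat \<Rightarrow> zmat \<Rightarrow> nat \<Rightarrow> nat \<Rightarrow> int" where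
  "frodo_dec n q B S C1 C2 i j =
     ((C2 i j - (\<Sum>k<n. C1 i k * S k j)) mod int q) div int (q div 2 ^ B)"

type_synonym frodo_basis = "zmat \<times> zmat \<times> zmat \<times> nat"

definition qspace :: "nat \<Rightarrow> nat \<Rightarrow> nat \<Rightarrow> nat \<Rightarrow> nat \<Rightarrow> nat set \<Rightarrow> frodo_basis set" where
  "qspace n mb nb q B W = zmats mb n q \<times> zmats mb nb q \<times> zmats mb nb (2 ^ B) \<times> W"

text \<open>Operators on the finite-dimensional space with orthonormal basis D, given by matrices.\<close>

definition unitary_on :: "'a set \<Rightarrow> ('a \<Rightarrow> 'a \<Rightarrow> complex) \<Rightarrow> bool" where
  "unitary_on D U \<longleftrightarrow> (\<forall>i\<in>D. \<forall>j\<in>D. (\<Sum>k\<in>D. cnj (U k i) * U k j) = (if i = j then 1 else 0))"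

definition apply_op :: "'a set \<Rightarrow> ('a \<Rightarrow> 'a \<Rightarrow> complex) \<Rightarrow> ('a \<Rightarrow> complex) \<Rightarrow> ('a \<Rightarrow> complex)" where
  "apply_op D U v = (\<lambda>i. \<Sum>j\<in>D. U i j * v j)"

definition ket :: "'a \<Rightarrow> ('a \<Rightarrow> complex)" where
  "ket x = (\<lambda>y. if y = x then 1 else 0)"

definition frodo_oracle_map :: "nat \<Rightarrow> nat \<Rightarrow> nat \<Rightarrow> nat \<Rightarrow> nat \<Rightarrow> zmat \<Rightarrow> frodo_basis \<Rightarrow> frodo_basis" where
  "frodo_oracle_map n mb nb q B S x = (case x of (C1, C2, z, w) \<Rightarrow>
     (C1, C2, (\<lambda>i j. if i < mb \<and> j < nb then (z i j + frodo_dec n q B S C1 C2 i j) mod 2 ^ B else z i j), w))"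

definition frodo_oracle :: "nat \<Rightarrow> nat \<Rightarrow> nat \<Rightarrow> nat \<Rightarrow> nat \<Rightarrow> zmat \<Rightarrow> frodo_basis \<Rightarrow> frodo_basis \<Rightarrow> complex" where
  "frodo_oracle n mb nb q B S x y = (if x = frodo_oracle_map n mb nb q B S y then 1 else 0)"

definition final_state :: "nat \<Rightarrow> nat \<Rightarrow> nat \<Rightarrow> nat \<Rightarrow> nat \<Rightarrow> nat set \<Rightarrow> zmat \<Rightarrow> frodo_basis
     \<Rightarrow> (frodo_basis \<Rightarrow> frodo_basis \<Rightarrow> complex) \<Rightarrow> (frodo_basis \<Rightarrow> frodo_basis \<Rightarrow> complex)
     \<Rightarrow> frodo_basis \<Rightarrow> complex" where
  "final_state n mb nb q B W S x0 U1 U2 =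
     (let D = qspace n mb nb q B W in
      apply_op D U2 (apply_op D (frodo_oracle n mb nb q B S) (apply_op D U1 (ket x0))))"

definition meas_prob :: "'a set \<Rightarrow> ('a \<Rightarrow> complex) \<Rightarrow> ('a \<Rightarrow> bool) \<Rightarrow> real" where
  "meas_prob D psi P = (\<Sum>x\<in>{x\<in>D. P x}. (cmod (psi x))\<^sup>2)"

end

theory Submission
  imports Defs "HOL-Analysis.Analysis" "HOL-Library.Real_Mod"
begin


lemma jordan_sin:
  fixes z :: real assumes "0 \<le> z" "z \<le> pi/2"
  shows "2 * z / pi \<le> sin z"
proof -
  have "concave_on {0..pi/2} sin"
    by (rule f''_le0_imp_concave[where f' = cos and f''="\<lambda>x. - sin x"])
       (auto intro!: derivative_eq_intros simp: sin_ge_zero)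
  then have cv: "convex_on {0..pi/2} (\<lambda>x. - sin x)" by (simp add: concave_on_def)
  define t where "t = 2 * z / pi"
  have t: "0 \<le> t" "t \<le> 1" using assms pi_gt_zero by (auto simp: t_def field_simps)
  have "- sin ((1 - t) *\<^sub>R 0 + t *\<^sub>R (pi/2)) \<le> (1 - t) * (- sin 0) + t * (- sin (pi/2))"
    by (rule convex_onD[OF cv]) (use t pi_gt_zero in auto)
  moreover have "t * (pi/2) = z" using pi_gt_zero by (simp add: t_def)
  ultimately show ?thesis by (simp add: t_def)
qed

definition ee :: "real \<Rightarrow> complex" where "ee x = cis (2 * pi * x)"

lemma ee_add: "ee (a + b) = ee a * ee b"
  by (simp add: ee_def cis_mult distrib_left)
lemma ee_diff: "ee (a - b) = ee a * ee (- b)"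
  using ee_add[of a "-b"] by simp
lemma ee_int[simp]: "ee (of_int k) = 1"
  by (simp add: ee_def)
lemma ee_zero[simp]: "ee 0 = 1" by (simp add: ee_def)
lemma norm_ee[simp]: "norm (ee x) = 1" by (simp add: ee_def)
lemma cnj_ee: "cnj (ee x) = ee (- x)" by (simp add: ee_def cis_cnj)
lemma ee_shift_int: "ee (x + of_int k) = ee x" by (simp add: ee_add)
lemma ee_sum: "ee (sum f A) = (\<Prod>a\<in>A. ee (f a))"
proof (cases "finite A")
  case True then show ?thesis by (induction A rule: finite_induct) (auto simp: ee_add)
qed simp
lemma ee_power: "ee x ^ n = ee (real n * x)"
  unfolding ee_def Complex.DeMoivre by (simp add: mult_ac)
lemma ee_eq_1: "ee x = 1 \<longleftrightarrow> x \<in> \<int>"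
proof
  assume "ee x = 1"
  then obtain n where "2 * pi * x = of_int n * (2 * pi)" by (auto simp: ee_def cis_eq_1_iff)
  then have "x = of_int n" using pi_gt_zero by (simp add: field_simps)
  then show "x \<in> \<int>" by simp
qed (auto elim: Ints_cases)

lemma geo_sum_int:
  fixes q :: nat and a :: int assumes "q > 0"
  shows "(\<Sum>x\<in>{0..<int q}. ee (of_int (x * a) / q)) = (if int q dvd a then of_nat q else 0)"
proof -
  have "(\<Sum>x\<in>{0..<int q}. ee (of_int (x * a) / q)) = (\<Sum>x<q. ee (of_int (int x * a) / q))"
  proof -
    have "{0..<int q} = int ` {..<q}" by (simp add: image_int_atLeastLessThan lessThan_atLeast0)
    then show ?thesis by (simp add: sum.reindex)
  qed
  also have "\<dots> = (\<Sum>x<q. ee (of_int a / q) ^ x)"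
    by (simp add: ee_power mult_ac)
  finally have eq: "(\<Sum>x\<in>{0..<int q}. ee (of_int (x * a) / q)) = (\<Sum>x<q. ee (of_int a / q) ^ x)" .
  show ?thesis
  proof (cases "int q dvd a")
    case True
    then obtain k where "a = int q * k" by blast
    then have "ee (of_int a / q) = 1" using assms by simp
    then show ?thesis using eq True by simp
  next
    case False
    have ne: "ee (of_int a / q) \<noteq> 1"
    proof
      assume "ee (of_int a / q) = 1"
      then obtain k where "of_int a / real q = of_int k" by (auto simp: ee_eq_1 elim: Ints_cases)
      then have "of_int a = (of_int (int q * k) :: real)" using assms by (simp add: field_simps)
      then have "a = int q * k" by linarith
      then show False using False by simp
    qed
    have "ee (of_int a / q) ^ q = 1" using assms by (simp add: ee_power)
    then show ?thesis using eq False ne by (simp add: geometric_sum)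
  qed
qed



definition gvecs :: "nat \<Rightarrow> (nat \<Rightarrow> 'a set) \<Rightarrow> 'a \<Rightarrow> (nat \<Rightarrow> 'a) set" where
  "gvecs m V d = {x. \<forall>i. (i < m \<longrightarrow> x i \<in> V i) \<and> (\<not> i < m \<longrightarrow> x i = d)}"

lemma gvecs_0: "gvecs 0 V d = {\<lambda>_. d}"
  by (auto simp: gvecs_def)

lemma gvecs_Suc: "gvecs (Suc m) V d = (\<lambda>(x,v). x(m:=v)) ` (gvecs m V d \<times> V m)"
proof (rule set_eqI, rule iffI)
  fix y assume y: "y \<in> gvecs (Suc m) V d"
  have "y(m:=d) \<in> gvecs m V d" "y m \<in> V m" using y by (auto simp: gvecs_def)
  moreover have "y = (y(m:=d))(m := y m)" by simp
  ultimately show "y \<in> (\<lambda>(x,v). x(m:=v)) ` (gvecs m V d \<times> V m)"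
    by (intro rev_image_eqI[of "(y(m:=d), y m)"]) auto
qed (auto simp: gvecs_def less_Suc_eq)

lemma gvecs_inj: "inj_on (\<lambda>(x,v). x(m:=v)) (gvecs m V d \<times> V m)"
proof (rule inj_onI, clarsimp)
  fix x v x' v' assume "x \<in> gvecs m V d" "x' \<in> gvecs m V d" and eq: "x(m := v) = x'(m := v')"
  then have "x m = d" "x' m = d" by (auto simp: gvecs_def)
  moreover have "v = v'" using fun_cong[OF eq, of m] by simp
  moreover have "x i = x' i" if "i \<noteq> m" for i using fun_cong[OF eq, of i] that by simp
  ultimately show "x = x' \<and> v = v'" by (metis ext)
qed

lemma sum_gvecs_Suc:
  "(\<Sum>y\<in>gvecs (Suc m) V d. g y) = (\<Sum>x\<in>gvecs m V d. \<Sum>v\<in>V m. g (x(m:=v)))"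
  unfolding gvecs_Suc sum.reindex[OF gvecs_inj] by (simp add: sum.cartesian_product split_def)

lemma finite_gvecs: "(\<And>i. i < m \<Longrightarrow> finite (V i)) \<Longrightarrow> finite (gvecs m V d)"
  by (induction m) (auto simp: gvecs_0 gvecs_Suc)

lemma sum_gvecs_prod:
  fixes f :: "nat \<Rightarrow> 'a \<Rightarrow> 'b::comm_semiring_1"
  shows "(\<Sum>x\<in>gvecs m V d. \<Prod>i<m. f i (x i)) = (\<Prod>i<m. \<Sum>v\<in>V i. f i v)"
proof (induction m)
  case 0 then show ?case by (simp add: gvecs_0)
next
  case (Suc m)
  have "(\<Sum>x\<in>gvecs (Suc m) V d. \<Prod>i<Suc m. f i (x i))
      = (\<Sum>x\<in>gvecs m V d. \<Sum>v\<in>V m. (\<Prod>i<m. f i (x i)) * f m v)"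
    unfolding sum_gvecs_Suc
    by (intro sum.cong refl) (auto simp: lessThan_Suc mult_ac intro!: prod.cong)
  also have "\<dots> = (\<Sum>x\<in>gvecs m V d. \<Prod>i<m. f i (x i)) * (\<Sum>v\<in>V m. f m v)"
    by (simp add: sum_product)
  finally show ?case using Suc by (simp add: lessThan_Suc mult.commute)
qed

lemma card_gvecs: "card (gvecs m V d) = (\<Prod>i<m. card (V i))"
  using sum_gvecs_prod[of "\<lambda>_ _. 1::nat" m V d] by simp

definition vecs :: "nat \<Rightarrow> nat \<Rightarrow> (nat \<Rightarrow> int) set" where
  "vecs n q = gvecs n (\<lambda>_. {0..<int q}) 0"

lemma zmats_gvecs: "zmats m n q = gvecs m (\<lambda>_. vecs n q) (\<lambda>_. 0)"
  unfolding zmats_def vecs_def gvecs_def by (auto simp: fun_eq_iff)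

lemma finite_vecs[simp]: "finite (vecs n q)" by (simp add: vecs_def finite_gvecs)
lemma finite_zmats[simp]: "finite (zmats m n q)" by (simp add: zmats_gvecs finite_gvecs)
lemma card_vecs: "card (vecs n q) = q ^ n" by (simp add: vecs_def card_gvecs)
lemma card_zmats: "card (zmats m n q) = q ^ (m * n)"
  by (simp add: zmats_gvecs card_gvecs card_vecs mult.commute flip: power_mult)



definition dotp :: "nat \<Rightarrow> (nat \<Rightarrow> int) \<Rightarrow> (nat \<Rightarrow> int) \<Rightarrow> int" where
  "dotp n v w = (\<Sum>j<n. v j * w j)"

definition ip :: "nat \<Rightarrow> nat \<Rightarrow> zmat \<Rightarrow> zmat \<Rightarrow> int" where
  "ip m n X Y = (\<Sum>i<m. dotp n (X i) (Y i))"

lemma prod_if_const: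
  fixes c :: "'a::comm_semiring_1"
  shows "(\<Prod>j<n. if P j then c else 0) = (if \<forall>j<n. P j then c ^ n else 0)"
  by (induction n) (auto simp: lessThan_Suc less_Suc_eq)

lemma ee_div_sum: "ee (of_int (sum f A) / c) = (\<Prod>a\<in>A. ee (of_int (f a) / c))"
  by (simp add: sum_divide_distrib ee_sum)

lemma orth_vecs:
  assumes "q > 0"
  shows "(\<Sum>v\<in>vecs n q. ee (of_int (dotp n v a) / q)) = (if \<forall>j<n. int q dvd a j then of_nat q ^ n else 0)"
proof -
  have "(\<Sum>v\<in>vecs n q. ee (of_int (dotp n v a) / q)) = (\<Sum>v\<in>vecs n q. \<Prod>j<n. ee (of_int (v j * a j) / q))"
    unfolding dotp_def ee_div_sum ..
  also have "\<dots> = (\<Prod>j<n. \<Sum>x\<in>{0..<int q}. ee (of_int (x * a j) / q))"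
    unfolding vecs_def by (rule sum_gvecs_prod)
  also have "\<dots> = (\<Prod>j<n. if int q dvd a j then of_nat q else 0)"
    by (intro prod.cong refl) (rule geo_sum_int[OF assms])
  finally show ?thesis by (simp add: prod_if_const)
qed

lemma orth_zmats:
  assumes "q > 0"
  shows "(\<Sum>X\<in>zmats m n q. ee (of_int (ip m n X A) / q)) = (if \<forall>i<m. \<forall>j<n. int q dvd A i j then of_nat q ^ (m * n) else 0)"
proof -
  have "(\<Sum>X\<in>zmats m n q. ee (of_int (ip m n X A) / q)) = (\<Sum>X\<in>zmats m n q. \<Prod>i<m. ee (of_int (dotp n (X i) (A i)) / q))"
    unfolding ip_def ee_div_sum ..
  also have "\<dots> = (\<Prod>i<m. \<Sum>v\<in>vecs n q. ee (of_int (dotp n v (A i)) / q))"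
    unfolding zmats_gvecs by (rule sum_gvecs_prod)
  also have "\<dots> = (\<Prod>i<m. if \<forall>j<n. int q dvd A i j then of_nat q ^ n else 0)"
    using assms by (simp add: orth_vecs)
  finally show ?thesis by (auto simp: prod_if_const mult.commute simp flip: power_mult)
qed

lemma dvd_diff_range_eq:
  fixes a b :: int assumes "0 \<le> a" "a < q" "0 \<le> b" "b < q" "q dvd (a - b)"
  shows "a = b"
proof (rule ccontr)
  assume "a \<noteq> b"
  then have "\<bar>q\<bar> \<le> \<bar>a - b\<bar>" using dvd_imp_le_int[of "a - b" q] assms by auto
  then show False using assms by auto
qed

lemma vecs_eq_iff_dvd:
  assumes "u \<in> vecs n q" "v \<in> vecs n q"
  shows "(\<forall>j<n. int q dvd (u j - v j)) \<longleftrightarrow> u = v"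
proof
  assume H: "\<forall>j<n. int q dvd (u j - v j)"
  show "u = v"
  proof
    fix j show "u j = v j"
    proof (cases "j < n")
      case True then show ?thesis using assms H dvd_diff_range_eq[of "u j" "int q" "v j"]
        by (auto simp: vecs_def gvecs_def)
    qed (use assms in \<open>auto simp: vecs_def gvecs_def\<close>)
  qed
qed simp

lemma zmats_eq_iff_dvd:
  assumes "U \<in> zmats m n q" "V \<in> zmats m n q"
  shows "(\<forall>i<m. \<forall>j<n. int q dvd (U i j - V i j)) \<longleftrightarrow> U = V"
proof
  assume H: "\<forall>i<m. \<forall>j<n. int q dvd (U i j - V i j)"
  show "U = V"
  proof (intro ext)
    fix i j show "U i j = V i j"
    proof (cases "i < m \<and> j < n")
      case True then show ?thesis using assms H dvd_diff_range_eq[of "U i j" "int q" "V i j"]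
        by (auto simp: zmats_def)
    qed (use assms in \<open>auto simp: zmats_def\<close>)
  qed
qed simp



definition fc :: "nat \<Rightarrow> nat \<Rightarrow> ((nat \<Rightarrow> int) \<Rightarrow> complex) \<Rightarrow> (nat \<Rightarrow> int) \<Rightarrow> complex" where
  "fc q n \<phi> t = (\<Sum>v\<in>vecs n q. ee (of_int (- dotp n v t) / q) * \<phi> v) / of_nat q ^ n"

lemma dotp_comm: "dotp n v w = dotp n w v"
  by (simp add: dotp_def mult.commute)

lemma ee_pair: "ee (of_int (- dotp n v t) / q) * ee (of_int (dotp n u t) / q)
      = ee (of_int (dotp n t (\<lambda>j. u j - v j)) / q)"
proof -
  have "dotp n t (\<lambda>j. u j - v j) = dotp n u t - dotp n v t"
    by (simp add: dotp_def algebra_simps sum_subtractf)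
  then show ?thesis by (simp add: ee_add[symmetric] add_divide_distrib[symmetric] diff_divide_distrib)
qed

lemma parseval:
  assumes q: "q > 0" and nrm: "\<And>v. v \<in> vecs n q \<Longrightarrow> norm (\<phi> v) = 1"
  shows "(\<Sum>t\<in>vecs n q. (cmod (fc q n \<phi> t))\<^sup>2) = 1"
proof -
  define S where "S t = (\<Sum>v\<in>vecs n q. ee (of_int (- dotp n v t) / q) * \<phi> v)" for t
  have Scnj: "S t * cnj (S t) = (\<Sum>v\<in>vecs n q. \<Sum>u\<in>vecs n q. \<phi> v * cnj (\<phi> u) * ee (of_int (dotp n t (\<lambda>j. u j - v j)) / q))" for t
  proof -
    have "S t * cnj (S t) = (\<Sum>v\<in>vecs n q. \<Sum>u\<in>vecs n q. (ee (of_int (- dotp n v t) / q) * \<phi> v) * (ee (of_int (dotp n u t) / q) * cnj (\<phi> u)))"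
      unfolding S_def cnj_sum sum_product by (simp add: cnj_ee)
    also have "\<dots> = (\<Sum>v\<in>vecs n q. \<Sum>u\<in>vecs n q. \<phi> v * cnj (\<phi> u) * (ee (of_int (- dotp n v t) / q) * ee (of_int (dotp n u t) / q)))"
      by (simp add: mult_ac)
    finally show ?thesis by (simp only: ee_pair)
  qed
  have "(\<Sum>t\<in>vecs n q. S t * cnj (S t)) = (\<Sum>v\<in>vecs n q. \<Sum>u\<in>vecs n q. \<phi> v * cnj (\<phi> u) * (\<Sum>t\<in>vecs n q. ee (of_int (dotp n t (\<lambda>j. u j - v j)) / q)))"
  proof -
    have "(\<Sum>t\<in>vecs n q. S t * cnj (S t)) = (\<Sum>v\<in>vecs n q. \<Sum>t\<in>vecs n q. \<Sum>u\<in>vecs n q. \<phi> v * cnj (\<phi> u) * ee (of_int (dotp n t (\<lambda>j. u j - v j)) / q))"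
      unfolding Scnj by (rule sum.swap)
    also have "\<dots> = (\<Sum>v\<in>vecs n q. \<Sum>u\<in>vecs n q. \<Sum>t\<in>vecs n q. \<phi> v * cnj (\<phi> u) * ee (of_int (dotp n t (\<lambda>j. u j - v j)) / q))"
      by (intro sum.cong refl sum.swap)
    finally show ?thesis by (simp only: sum_distrib_left)
  qed
  also have "\<dots> = (\<Sum>v\<in>vecs n q. \<Sum>u\<in>vecs n q. if u = v then \<phi> v * cnj (\<phi> v) * of_nat q ^ n else 0)"
    by (intro sum.cong refl) (simp add: orth_vecs[OF q] vecs_eq_iff_dvd)
  also have "\<dots> = (\<Sum>v\<in>vecs n q. of_nat q ^ n)"
  proof (intro sum.cong refl)
    fix v assume v: "v \<in> vecs n q"
    have "\<phi> v * cnj (\<phi> v) = 1" using nrm[OF v] by (simp add: complex_norm_square[symmetric])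
    then show "(\<Sum>u\<in>vecs n q. if u = v then \<phi> v * cnj (\<phi> v) * of_nat q ^ n else 0) = of_nat q ^ n"
      using v by (simp add: sum.delta)
  qed
  also have "\<dots> = of_nat q ^ n * of_nat q ^ n" by (simp add: card_vecs)
  finally have main: "(\<Sum>t\<in>vecs n q. S t * cnj (S t)) = of_nat q ^ n * of_nat q ^ n" .
  have "complex_of_real (\<Sum>t\<in>vecs n q. (cmod (fc q n \<phi> t))\<^sup>2) = (\<Sum>t\<in>vecs n q. S t * cnj (S t)) / (of_nat q ^ n * of_nat q ^ n)"
  proof -
    have pt: "complex_of_real ((cmod (fc q n \<phi> t))\<^sup>2) = S t * cnj (S t) / (of_nat q ^ n * of_nat q ^ n)" for t
      unfolding complex_norm_square fc_def S_def[symmetric] by simp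
    show ?thesis unfolding of_real_sum pt sum_divide_distrib ..
  qed
  also have "\<dots> = 1" using main q by simp
  finally show ?thesis by (metis of_real_eq_1_iff)
qed



lemma cmod_cis_minus_1: "cmod (cis (2 * x) - 1) = 2 * \<bar>sin x\<bar>"
proof -
  have "(cmod (cis (2 * x) - 1))\<^sup>2 = (cos (2*x) - 1)\<^sup>2 + (sin (2*x))\<^sup>2"
    by (simp add: cmod_power2)
  also have "\<dots> = (2 * \<bar>sin x\<bar>)\<^sup>2"
  proof -
    have "(cos (2*x) - 1)\<^sup>2 + (sin (2*x))\<^sup>2 = 4 * (sin x)\<^sup>2 * ((sin x)\<^sup>2 + (cos x)\<^sup>2)"
      unfolding cos_double_sin sin_double power2_eq_square by algebra
    then show ?thesis using sin_cos_squared_add[of x] by (simp add: power2_eq_square)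
  qed
  finally show ?thesis
    by (metis abs_of_nonneg norm_ge_zero power2_eq_imp_eq abs_ge_zero mult_nonneg_nonneg zero_le_numeral)
qed

lemma cmod_ee_minus_1: "cmod (ee x - 1) = 2 * \<bar>sin (pi * x)\<bar>"
  using cmod_cis_minus_1[of "pi * x"] by (simp add: ee_def mult_ac)

lemma sum_mod_group:
  fixes f :: "nat \<Rightarrow> 'a::comm_semiring_1"
  shows "(\<Sum>r<a * L. f (r mod L)) = of_nat a * (\<Sum>\<rho><L. f \<rho>)"
proof -
  have "(\<Sum>r<a * L. f (r mod L)) = (\<Sum>m<a. \<Sum>r\<in>{m*L..<m*L+L}. f (r mod L))"
    by (rule sum.nat_group[symmetric])
  also have "\<dots> = (\<Sum>m<a. \<Sum>\<rho><L. f \<rho>)"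
  proof (rule sum.cong[OF refl])
    fix m
    have "(\<Sum>r\<in>{m*L..<m*L+L}. f (r mod L)) = (\<Sum>r\<in>{0+m*L..<L+m*L}. f (r mod L))" by (simp add: add.commute)
    also have "\<dots> = (\<Sum>\<rho>\<in>{0..<L}. f ((\<rho> + m*L) mod L))" by (rule sum.shift_bounds_nat_ivl)
    also have "\<dots> = (\<Sum>\<rho>\<in>{0..<L}. f \<rho>)" by (rule sum.cong) auto
    finally show "(\<Sum>r\<in>{m*L..<m*L+L}. f (r mod L)) = (\<Sum>\<rho><L. f \<rho>)" by (simp add: atLeast0LessThan)
  qed
  also have "\<dots> = of_nat a * (\<Sum>\<rho><L. f \<rho>)" by simp
  finally show ?thesis .
qed



lemma coprime_pow2_odd: "odd (u::int) \<Longrightarrow> coprime (int (2 ^ D)) u"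
  by simp

lemma bij_sum_mod:
  fixes u x :: int and g :: "int \<Rightarrow> 'a::comm_monoid_add"
  assumes "odd u"
  shows "(\<Sum>j\<in>{0..<int (2^D)}. g ((x + j * u) mod int (2^D))) = (\<Sum>r\<in>{0..<int (2^D)}. g r)"
proof -
  let ?q = "int (2^D)"
  let ?f = "\<lambda>j. (x + j * u) mod ?q"
  have inj: "inj_on ?f {0..<?q}"
  proof (rule inj_onI)
    fix j j' assume j: "j \<in> {0..<?q}" "j' \<in> {0..<?q}" and eq: "?f j = ?f j'"
    have "?q dvd (x + j * u) - (x + j' * u)" using eq by (simp add: mod_eq_dvd_iff)
    then have "?q dvd (j - j') * u" by (simp add: algebra_simps)
    then have "?q dvd (j - j')"
      using coprime_dvd_mult_left_iff[OF coprime_pow2_odd[OF assms, of D]] by simp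
    then show "j = j'" using j dvd_diff_range_eq[of j ?q j'] by auto
  qed
  have im: "?f ` {0..<?q} = {0..<?q}"
    by (rule endo_inj_surj) (use inj in auto)
  have "(\<Sum>r\<in>{0..<?q}. g r) = (\<Sum>r\<in>?f ` {0..<?q}. g r)" using im by simp
  also have "\<dots> = (\<Sum>j\<in>{0..<?q}. g (?f j))" by (rule sum.reindex[OF inj, unfolded comp_def])
  finally show ?thesis by simp
qed

lemma dotp_upd:
  assumes "i0 < n"
  shows "dotp n (v(i0:=w)) s = dotp n v s - v i0 * s i0 + w * s i0"
proof -
  have "dotp n (v(i0:=w)) s = (\<Sum>j<n. v j * s j + (if j = i0 then (w - v i0) * s i0 else 0))"
    unfolding dotp_def by (intro sum.cong refl) (auto simp: algebra_simps)
  also have "\<dots> = dotp n v s + (w - v i0) * s i0"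
    using assms by (simp add: sum.distrib dotp_def)
  finally show ?thesis by (simp add: algebra_simps)
qed

lemma averaging:
  fixes H :: "int \<Rightarrow> complex"
  assumes q: "q = 2 ^ D" and hper: "\<And>y y'. y mod int q = y' mod int q \<Longrightarrow> H y = H y'"
    and i0: "i0 < n" and odd: "odd (s i0)"
  shows "of_nat q * (\<Sum>v\<in>vecs n q. H (dotp n v s)) = of_nat q ^ n * (\<Sum>r\<in>{0..<int q}. H r)"
proof -
  have qpos: "int q > 0" using q by simp
  have shift: "(\<Sum>v\<in>vecs n q. H (dotp n v s + j * s i0)) = (\<Sum>v\<in>vecs n q. H (dotp n v s))"
    if j: "j \<in> {0..<int q}" for j
  proof (rule sum.reindex_bij_witness[where i = "\<lambda>v. v(i0 := (v i0 - j) mod int q)"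
        and j = "\<lambda>v. v(i0 := (v i0 + j) mod int q)"])
    fix v assume v: "v \<in> vecs n q"
    then have vr: "0 \<le> v i0" "v i0 < int q" using i0 by (auto simp: vecs_def gvecs_def)
    show "(v(i0 := (v i0 + j) mod int q))(i0 := ((v(i0 := (v i0 + j) mod int q)) i0 - j) mod int q) = v"
      using vr by (simp add: mod_diff_left_eq)
    show "v(i0 := (v i0 + j) mod int q) \<in> vecs n q"
      using v qpos i0 by (auto simp: vecs_def gvecs_def)
    show "(v(i0 := (v i0 - j) mod int q))(i0 := ((v(i0 := (v i0 - j) mod int q)) i0 + j) mod int q) = v"
      using vr by (simp add: mod_add_left_eq)
    show "v(i0 := (v i0 - j) mod int q) \<in> vecs n q"
      using v qpos i0 by (auto simp: vecs_def gvecs_def)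
    show "H (dotp n (v(i0 := (v i0 + j) mod int q)) s) = H (dotp n v s + j * s i0)"
    proof (rule hper)
      have "dotp n (v(i0 := (v i0 + j) mod int q)) s = dotp n v s - v i0 * s i0 + ((v i0 + j) mod int q) * s i0"
        using i0 by (rule dotp_upd)
      also have "\<dots> mod int q = (dotp n v s - v i0 * s i0 + (v i0 + j) * s i0) mod int q"
        by (metis mod_add_right_eq mod_mult_left_eq)
      also have "dotp n v s - v i0 * s i0 + (v i0 + j) * s i0 = dotp n v s + j * s i0"
        by (simp add: algebra_simps)
      finally show "dotp n (v(i0 := (v i0 + j) mod int q)) s mod int q = (dotp n v s + j * s i0) mod int q" .
    qed
  qed
  have "of_nat q * (\<Sum>v\<in>vecs n q. H (dotp n v s)) = (\<Sum>j\<in>{0..<int q}. \<Sum>v\<in>vecs n q. H (dotp n v s))"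
    by simp
  also have "\<dots> = (\<Sum>j\<in>{0..<int q}. \<Sum>v\<in>vecs n q. H (dotp n v s + j * s i0))"
    by (rule sum.cong[OF refl]) (rule shift[symmetric])
  also have "\<dots> = (\<Sum>v\<in>vecs n q. \<Sum>j\<in>{0..<int q}. H ((dotp n v s + j * s i0) mod int q))"
    by (subst sum.swap) (intro sum.cong refl hper, simp)
  also have "\<dots> = (\<Sum>v\<in>vecs n q. \<Sum>r\<in>{0..<int q}. H r)"
    unfolding q by (rule sum.cong[OF refl]) (rule bij_sum_mod[OF odd])
  also have "\<dots> = of_nat q ^ n * (\<Sum>r\<in>{0..<int q}. H r)"
    by (simp add: card_vecs)
  finally show ?thesis .
qed



definition phiS :: "nat \<Rightarrow> nat \<Rightarrow> nat \<Rightarrow> (nat \<Rightarrow> int) \<Rightarrow> (nat \<Rightarrow> int) \<Rightarrow> complex" where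
  "phiS n q B s v = ee (- (of_int (((0 - dotp n v s) mod int q) div int (q div 2^B)) / real (2^B)))"

lemma ee_diff_int[simp]: "ee (x - of_int k) = ee x"
  using ee_shift_int[of x "- k"] by simp

lemma claim1:
  fixes y :: int and Q L q :: nat
  assumes "q = Q * L" "Q > 0" "L > 0"
  shows "ee (of_int (- y) / q) * ee (- (of_int (((0 - y) mod int q) div int L) / real Q))
       = ee (of_int (((- y) mod int q) mod int L) / q)"
proof -
  define m where "m = (- y) mod int q"
  have m1: "m = - y - int q * ((- y) div int q)" by (simp add: m_def minus_div_mult_eq_mod[symmetric] mult.commute)
  have m2: "m mod int L = m - int L * (m div int L)" by (simp add: minus_div_mult_eq_mod[symmetric] mult.commute)
  have "of_int (m mod int L) / real q = of_int (- y) / q + (- (of_int (m div int L) / real Q)) + of_int (- ((- y) div int q))"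
    using assms unfolding m2 by (simp add: m1 field_simps)
  then have "ee (of_int (m mod int L) / real q) = ee (of_int (- y) / q + (- (of_int (m div int L) / real Q)))"
    by simp
  then show ?thesis by (simp add: ee_diff m_def)
qed

lemma core:
  assumes q: "q = 2 ^ D" and B: "1 \<le> B" "B \<le> D" and s: "s \<in> vecs n q" and i0: "i0 < n" and odd: "odd (s i0)"
  shows "4 / pi\<^sup>2 \<le> (cmod (fc q n (phiS n q B s) s))\<^sup>2"
proof -
  define Q :: nat where "Q = 2 ^ B"
  define L :: nat where "L = 2 ^ (D - B)"
  have qQL: "q = Q * L" using B by (simp add: q Q_def L_def flip: power_add)
  have L: "q div 2 ^ B = L" using qQL by (simp add: Q_def)
  have Qpos: "Q > 0" "L > 0" by (auto simp: Q_def L_def)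
  have Q2: "Q \<ge> 2"
  proof -
    have "(2::nat)^1 \<le> 2^B" using B by (intro power_increasing) auto
    then show ?thesis by (simp add: Q_def)
  qed
  define H where "H y = ee (of_int (((- y) mod int q) mod int L) / q)" for y
  have st1: "ee (of_int (- dotp n v s) / q) * phiS n q B s v = H (dotp n v s)" for v
    unfolding phiS_def L H_def using claim1[OF qQL Qpos] by (simp add: Q_def)
  have hper: "H y = H y'" if "y mod int q = y' mod int q" for y y'
    unfolding H_def using mod_minus_cong[OF that] by simp
  have st3: "of_nat q * (\<Sum>v\<in>vecs n q. H (dotp n v s)) = of_nat q ^ n * (\<Sum>r\<in>{0..<int q}. H r)"
    apply (rule averaging[where H=H])
    apply (rule q)
    apply (erule hper)
    apply (rule i0)
    apply (rule odd)
    done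
  have st4: "(\<Sum>r\<in>{0..<int q}. H r) = (\<Sum>r\<in>{0..<int q}. ee (of_int (r mod int L) / q))"
  proof -
    have "(\<Sum>r\<in>{0..<int q}. ee (of_int (r mod int L) / q)) = (\<Sum>j\<in>{0..<int q}. ee (of_int (((0 + j * (-1)) mod int q) mod int L) / q))"
      unfolding q by (rule bij_sum_mod[symmetric]) simp
    then show ?thesis by (simp add: H_def)
  qed
  have st5: "(\<Sum>r\<in>{0..<int q}. ee (of_int (r mod int L) / q)) = of_nat Q * (\<Sum>\<rho><L. ee (real \<rho> / q))"
  proof -
    have "{0..<int q} = int ` {..<q}" by (simp add: image_int_atLeastLessThan lessThan_atLeast0)
    then have "(\<Sum>r\<in>{0..<int q}. ee (of_int (r mod int L) / q)) = (\<Sum>r<q. ee (real (r mod L) / q))"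
      by (simp add: sum.reindex flip: of_nat_mod)
    also have "\<dots> = (\<Sum>r<Q * L. (\<lambda>\<rho>. ee (real \<rho> / q)) (r mod L))" by (simp add: qQL)
    also have "\<dots> = of_nat Q * (\<Sum>\<rho><L. ee (real \<rho> / q))" by (rule sum_mod_group)
    finally show ?thesis .
  qed
  define w where "w = ee (1 / q)"
  have qge2: "q \<ge> 2"
  proof -
    have "Q \<le> Q * L" using Qpos by simp
    then show ?thesis using Q2 qQL by linarith
  qed
  have w1: "w \<noteq> 1"
  proof
    assume "w = 1"
    then obtain k where k: "1 / real q = of_int k" by (auto simp: w_def ee_eq_1 elim: Ints_cases)
    have "0 < 1 / real q" "1 / real q < 1" using qge2 by auto
    then have "0 < k" "k < 1" unfolding k by simp_all
    then show False by linarith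
  qed
  have st6: "(\<Sum>\<rho><L. ee (real \<rho> / q)) = (w ^ L - 1) / (w - 1)"
  proof -
    have "(\<Sum>\<rho><L. ee (real \<rho> / q)) = (\<Sum>\<rho><L. w ^ \<rho>)" by (simp add: w_def ee_power)
    then show ?thesis using w1 by (simp add: geometric_sum)
  qed
  have wL: "w ^ L = ee (1 / Q)" using qQL Qpos by (simp add: w_def ee_power)
  have sQ: "cmod (w ^ L - 1) = 2 * sin (pi / Q)"
  proof -
    have "0 < sin (pi / Q)" using Q2 by (intro sin_gt_zero) (auto simp: field_simps)
    then show ?thesis unfolding wL cmod_ee_minus_1 by simp
  qed
  have sq_pos: "0 < sin (pi / q)" using qge2 by (intro sin_gt_zero) (auto simp: field_simps)
  have sq: "cmod (w - 1) = 2 * sin (pi / q)"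
    unfolding w_def cmod_ee_minus_1 using sq_pos by simp
  have fc_eq: "fc q n (phiS n q B s) s = (\<Sum>v\<in>vecs n q. H (dotp n v s)) / of_nat q ^ n"
    unfolding fc_def st1 ..
  have "(\<Sum>v\<in>vecs n q. H (dotp n v s)) = of_nat q ^ n * (of_nat Q * ((w ^ L - 1) / (w - 1))) / of_nat q"
  proof -
    have "(\<Sum>v\<in>vecs n q. H (dotp n v s)) = of_nat q ^ n * (\<Sum>r\<in>{0..<int q}. H r) / of_nat q"
      using st3 qge2 by (simp add: eq_divide_eq mult.commute)
    then show ?thesis unfolding st4 st5 st6 .
  qed
  then have fc2: "fc q n (phiS n q B s) s = of_nat Q * ((w ^ L - 1) / (w - 1)) / of_nat q"
    unfolding fc_eq using qge2 by simp
  have c: "cmod (fc q n (phiS n q B s) s) = Q * sin (pi / Q) / (q * sin (pi / q))"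
    unfolding fc2 by (simp add: norm_divide norm_mult sQ sq)
  have j: "2 * (pi / Q) / pi \<le> sin (pi / Q)"
    using Q2 by (intro jordan_sin) (auto simp: field_simps)
  have sle: "sin (pi / q) \<le> pi / q" by (rule sin_x_le_x) simp
  have "2 / pi \<le> Q * sin (pi / Q) / (q * sin (pi / q))"
  proof -
    have "2 / pi = Q * (2 / Q) / (q * (pi / q))" using Qpos qge2 by (simp add: field_simps)
    also have "\<dots> \<le> Q * sin (pi / Q) / (q * sin (pi / q))"
    proof (rule frac_le)
      show "0 \<le> Q * sin (pi / Q)" using Q2 by (intro mult_nonneg_nonneg sin_ge_zero) (auto simp: field_simps)
      show "Q * (2 / Q) \<le> Q * sin (pi / Q)" using j Qpos by (intro mult_left_mono) auto
      show "0 < q * sin (pi / q)" using sq_pos qge2 by simp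
      show "q * sin (pi / q) \<le> q * (pi / q)" using sle by (intro mult_left_mono) auto
    qed
    finally show ?thesis .
  qed
  then have "2 / pi \<le> cmod (fc q n (phiS n q B s) s)" unfolding c .
  then have "(2 / pi)\<^sup>2 \<le> (cmod (fc q n (phiS n q B s) s))\<^sup>2"
    by (rule power_mono) (simp add: pi_gt_zero less_imp_le)
  then show ?thesis by (simp add: power_divide)
qed



definition tensor :: "('a \<Rightarrow> 'a \<Rightarrow> complex) \<Rightarrow> ('b \<Rightarrow> 'b \<Rightarrow> complex) \<Rightarrow> ('a \<times> 'b) \<Rightarrow> ('a \<times> 'b) \<Rightarrow> complex" where
  "tensor A B x y = A (fst x) (fst y) * B (snd x) (snd y)"

definition idm :: "'a \<Rightarrow> 'a \<Rightarrow> complex" where "idm x y = (if x = y then 1 else 0)"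

definition fourier :: "nat \<Rightarrow> nat \<Rightarrow> nat \<Rightarrow> int \<Rightarrow> zmat \<Rightarrow> zmat \<Rightarrow> complex" where
  "fourier m n q \<sigma> Y X = complex_of_real (1 / sqrt (real q ^ (m * n))) * ee (of_int (\<sigma> * ip m n Y X) / real q)"

lemma unitary_tensor:
  assumes "unitary_on A UA" "unitary_on B UB"
  shows "unitary_on (A \<times> B) (tensor UA UB)"
  unfolding unitary_on_def
proof (intro ballI)
  fix i j assume i: "i \<in> A \<times> B" and j: "j \<in> A \<times> B"
  have "(\<Sum>k\<in>A \<times> B. cnj (tensor UA UB k i) * tensor UA UB k j)
      = (\<Sum>ka\<in>A. \<Sum>kb\<in>B. (cnj (UA ka (fst i)) * UA ka (fst j)) * (cnj (UB kb (snd i)) * UB kb (snd j)))"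
    unfolding tensor_def by (subst sum.cartesian_product) (simp add: split_def mult_ac)
  also have "\<dots> = (\<Sum>ka\<in>A. cnj (UA ka (fst i)) * UA ka (fst j)) * (\<Sum>kb\<in>B. cnj (UB kb (snd i)) * UB kb (snd j))"
    by (simp add: sum_product)
  also have "\<dots> = (if i = j then 1 else 0)"
    using assms i j unfolding unitary_on_def by (auto simp: prod_eq_iff)
  finally show "(\<Sum>k\<in>A \<times> B. cnj (tensor UA UB k i) * tensor UA UB k j) = (if i = j then 1 else 0)" .
qed

lemma unitary_idm: "finite A \<Longrightarrow> unitary_on A idm"
  unfolding unitary_on_def
proof (intro ballI)
  fix i j assume "finite A" "i \<in> A" "j \<in> A"
  have eq: "(\<lambda>k. cnj (idm k i) * idm k j) = (\<lambda>k. if k = i then (if i = j then 1 else 0) else 0)"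
    by (auto simp: idm_def)
  show "(\<Sum>k\<in>A. cnj (idm k i) * idm k j) = (if i = j then 1 else 0)"
    unfolding eq using \<open>finite A\<close> \<open>i \<in> A\<close> by simp
qed

lemma ip_diff: "ip m n K J - ip m n K I = ip m n K (\<lambda>a b. J a b - I a b)"
  by (simp add: ip_def dotp_def algebra_simps sum_subtractf)

lemma ip_uminus: "- ip m n K J = ip m n K (\<lambda>a b. - J a b)"
  by (simp add: ip_def dotp_def sum_negf)

lemma ip_comm: "ip m n X Y = ip m n Y X"
  by (simp add: ip_def dotp_comm)

lemma unitary_fourier:
  assumes q: "q > 0" and \<sigma>: "\<sigma> = 1 \<or> \<sigma> = -1"
  shows "unitary_on (zmats m n q) (fourier m n q \<sigma>)"
  unfolding unitary_on_def
proof (intro ballI)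
  fix I J assume I: "I \<in> zmats m n q" and J: "J \<in> zmats m n q"
  define c where "c = 1 / sqrt (real q ^ (m * n))"
  have c2: "c * c * real q ^ (m * n) = 1" using q by (simp add: c_def)
  have "cnj (fourier m n q \<sigma> K I) * fourier m n q \<sigma> K J
      = complex_of_real (c * c) * ee (of_int (ip m n K (\<lambda>a b. \<sigma> * (J a b - I a b))) / real q)" for K
  proof -
    have "ip m n K (\<lambda>a b. \<sigma> * (J a b - I a b)) = \<sigma> * ip m n K J - \<sigma> * ip m n K I"
      using \<sigma> by (auto simp: ip_diff[symmetric] ip_uminus algebra_simps)
    have "cnj (fourier m n q \<sigma> K I) * fourier m n q \<sigma> K J
       = complex_of_real c * complex_of_real c * (ee (- (of_int (\<sigma> * ip m n K I) / real q)) * ee (of_int (\<sigma> * ip m n K J) / real q))"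
      by (simp add: fourier_def c_def cnj_ee)
    also have "\<dots> = complex_of_real (c * c) * ee (of_int (\<sigma> * ip m n K J - \<sigma> * ip m n K I) / real q)"
      by (simp only: ee_add[symmetric] of_real_mult) (simp add: diff_divide_distrib)
    finally show ?thesis using \<open>ip m n K (\<lambda>a b. \<sigma> * (J a b - I a b)) = _\<close> by simp
  qed
  then have "(\<Sum>K\<in>zmats m n q. cnj (fourier m n q \<sigma> K I) * fourier m n q \<sigma> K J)
      = complex_of_real (c * c) * (\<Sum>K\<in>zmats m n q. ee (of_int (ip m n K (\<lambda>a b. \<sigma> * (J a b - I a b))) / real q))"
    by (simp add: sum_distrib_left)
  also have "\<dots> = complex_of_real (c * c) * (if \<forall>a<m. \<forall>b<n. int q dvd (J a b - I a b) then of_nat q ^ (m * n) else 0)"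
    using \<sigma> by (auto simp: orth_zmats[OF q] dvd_diff_commute)
  also have "\<dots> = (if I = J then 1 else 0)"
  proof -
    have "(\<forall>a<m. \<forall>b<n. int q dvd (J a b - I a b)) \<longleftrightarrow> J = I" by (rule zmats_eq_iff_dvd[OF J I])
    moreover have "complex_of_real (c * c) * of_nat q ^ (m * n) = 1"
      using c2 by (metis of_real_1 of_real_mult of_real_of_nat_eq of_real_power)
    ultimately show ?thesis by auto
  qed
  finally show "(\<Sum>K\<in>zmats m n q. cnj (fourier m n q \<sigma> K I) * fourier m n q \<sigma> K J) = (if I = J then 1 else 0)" .
qed



definition cvec :: "nat \<Rightarrow> nat \<Rightarrow> (nat \<Rightarrow> nat) \<Rightarrow> zmat" where
  "cvec mb nb cols = (\<lambda>i j. if i < mb \<and> j < nb \<and> j = cols i then 1 else 0)"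

definition preim :: "nat \<Rightarrow> nat \<Rightarrow> nat \<Rightarrow> nat \<Rightarrow> nat \<Rightarrow> zmat \<Rightarrow> frodo_basis \<Rightarrow> frodo_basis" where
  "preim n mb nb q B S x = (case x of (C1, C2, z, w) \<Rightarrow>
     (C1, C2, (\<lambda>i j. if i < mb \<and> j < nb then (z i j - frodo_dec n q B S C1 C2 i j) mod 2 ^ B else z i j), w))"

lemma apply_ket: "x0 \<in> D \<Longrightarrow> finite D \<Longrightarrow> apply_op D U (ket x0) = (\<lambda>y. U y x0)"
proof
  fix y assume "x0 \<in> D" "finite D"
  have "(\<Sum>j\<in>D. U y j * ket x0 j) = (\<Sum>j\<in>D. if j = x0 then U y x0 else 0)"
    by (rule sum.cong) (auto simp: ket_def)
  then show "apply_op D U (ket x0) y = U y x0" using \<open>x0 \<in> D\<close> \<open>finite D\<close> by (simp add: apply_op_def)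
qed

lemma preim_props:
  assumes x: "x \<in> qspace n mb nb q B W"
  shows "preim n mb nb q B S x \<in> qspace n mb nb q B W"
    and "\<And>y. y \<in> qspace n mb nb q B W \<Longrightarrow> (x = frodo_oracle_map n mb nb q B S y \<longleftrightarrow> y = preim n mb nb q B S x)"
proof -
  obtain C1 C2 z w where xe: "x = (C1, C2, z, w)" by (cases x) auto
  have z: "z \<in> zmats mb nb (2^B)" and rest: "C1 \<in> zmats mb n q" "C2 \<in> zmats mb nb q" "w \<in> W"
    using x by (auto simp: qspace_def xe)
  show "preim n mb nb q B S x \<in> qspace n mb nb q B W"
    using z rest by (auto simp: xe preim_def qspace_def zmats_def)
  fix y assume y: "y \<in> qspace n mb nb q B W"
  obtain C1' C2' z' w' where ye: "y = (C1', C2', z', w')" by (cases y) auto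
  have z': "z' \<in> zmats mb nb (2^B)" using y by (auto simp: qspace_def ye)
  let ?d = "frodo_dec n q B S C1 C2"
  show "x = frodo_oracle_map n mb nb q B S y \<longleftrightarrow> y = preim n mb nb q B S x"
  proof
    assume H: "x = frodo_oracle_map n mb nb q B S y"
    then have e: "C1' = C1" "C2' = C2" "w' = w"
      and zz: "z = (\<lambda>i j. if i < mb \<and> j < nb then (z' i j + frodo_dec n q B S C1' C2' i j) mod 2 ^ B else z' i j)"
      by (auto simp: xe ye frodo_oracle_map_def)
    have "z' = (\<lambda>i j. if i < mb \<and> j < nb then (z i j - ?d i j) mod 2 ^ B else z i j)"
    proof (intro ext)
      fix i j
      show "z' i j = (if i < mb \<and> j < nb then (z i j - ?d i j) mod 2 ^ B else z i j)"
      proof (cases "i < mb \<and> j < nb")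
        case True
        then have r: "0 \<le> z' i j" "z' i j < 2 ^ B" using z' by (auto simp: zmats_def)
        have "(z i j - ?d i j) mod 2 ^ B = ((z' i j + ?d i j) mod 2 ^ B - ?d i j) mod 2 ^ B"
          using True by (simp add: zz e)
        also have "\<dots> = z' i j" using r by (simp add: mod_diff_left_eq)
        finally show ?thesis using True by simp
      qed (auto simp: zz)
    qed
    then show "y = preim n mb nb q B S x" by (simp add: ye xe preim_def e)
  next
    assume H: "y = preim n mb nb q B S x"
    then have e: "C1' = C1" "C2' = C2" "w' = w"
      and zz: "z' = (\<lambda>i j. if i < mb \<and> j < nb then (z i j - ?d i j) mod 2 ^ B else z i j)"
      by (auto simp: xe ye preim_def)
    have "z = (\<lambda>i j. if i < mb \<and> j < nb then (z' i j + ?d i j) mod 2 ^ B else z' i j)"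
    proof (intro ext)
      fix i j
      show "z i j = (if i < mb \<and> j < nb then (z' i j + ?d i j) mod 2 ^ B else z' i j)"
      proof (cases "i < mb \<and> j < nb")
        case True
        then have r: "0 \<le> z i j" "z i j < 2 ^ B" using z by (auto simp: zmats_def)
        have "(z' i j + ?d i j) mod 2 ^ B = ((z i j - ?d i j) mod 2 ^ B + ?d i j) mod 2 ^ B"
          using True by (simp add: zz)
        also have "\<dots> = z i j" using r by (simp add: mod_add_left_eq)
        finally show ?thesis using True by simp
      qed (auto simp: zz)
    qed
    then show "x = frodo_oracle_map n mb nb q B S y" by (simp add: ye xe frodo_oracle_map_def e)
  qed
qed

lemma finite_qspace: "finite W \<Longrightarrow> finite (qspace n mb nb q B W)"
  by (simp add: qspace_def)

lemma apply_oracle: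
  assumes "finite W" "x \<in> qspace n mb nb q B W"
  shows "apply_op (qspace n mb nb q B W) (frodo_oracle n mb nb q B S) \<psi> x = \<psi> (preim n mb nb q B S x)"
proof -
  let ?D = "qspace n mb nb q B W"
  have "apply_op ?D (frodo_oracle n mb nb q B S) \<psi> x = (\<Sum>y\<in>?D. if y = preim n mb nb q B S x then \<psi> y else 0)"
    unfolding apply_op_def
    by (rule sum.cong[OF refl]) (use preim_props(2)[OF assms(2)] in \<open>auto simp: frodo_oracle_def\<close>)
  also have "\<dots> = \<psi> (preim n mb nb q B S x)"
    using preim_props(1)[OF assms(2)] finite_qspace[OF assms(1)] by simp
  finally show ?thesis .
qed



definition U1m :: "nat \<Rightarrow> nat \<Rightarrow> nat \<Rightarrow> nat \<Rightarrow> nat \<Rightarrow> frodo_basis \<Rightarrow> frodo_basis \<Rightarrow> complex" where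
  "U1m n mb nb q B = tensor (fourier mb n q 1) (tensor idm (tensor (fourier mb nb (2^B) 1) idm))"
definition U2m :: "nat \<Rightarrow> nat \<Rightarrow> nat \<Rightarrow> frodo_basis \<Rightarrow> frodo_basis \<Rightarrow> complex" where
  "U2m n mb q = tensor (fourier mb n q (-1)) (tensor idm (tensor idm idm))"
definition x0m :: "nat \<Rightarrow> nat \<Rightarrow> (nat \<Rightarrow> nat) \<Rightarrow> frodo_basis" where
  "x0m mb nb cols = ((\<lambda>_ _. 0), (\<lambda>_ _. 0), cvec mb nb cols, 0)"
definition colv :: "zmat \<Rightarrow> nat \<Rightarrow> nat \<Rightarrow> int" where "colv S c = (\<lambda>i. S i c)"

lemma zero_zmats[simp]: "q > 0 \<Longrightarrow> (\<lambda>_ _. 0) \<in> zmats m n q"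
  by (simp add: zmats_def)

lemma ip_zero_right[simp]: "ip m n X (\<lambda>_ _. 0) = 0"
  by (simp add: ip_def dotp_def)

lemma ip_cvec:
  assumes "\<forall>k<mb. cols k < nb"
  shows "ip mb nb Z (cvec mb nb cols) = (\<Sum>k<mb. Z k (cols k))"
  unfolding ip_def dotp_def
proof (rule sum.cong[OF refl])
  fix k assume k: "k \<in> {..<mb}"
  have "(\<Sum>j<nb. Z k j * cvec mb nb cols k j) = (\<Sum>j<nb. if j = cols k then Z k (cols k) else 0)"
    by (rule sum.cong) (use k in \<open>auto simp: cvec_def\<close>)
  then show "(\<Sum>j<nb. Z k j * cvec mb nb cols k j) = Z k (cols k)" using assms k by simp
qed

lemma ee_mod_int:
  assumes "Q > 0" shows "ee (of_int (a mod int Q) / real Q) = ee (of_int a / real Q)"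
proof -
  have "of_int (a mod int Q) / real Q = of_int a / real Q - of_int (a div int Q)"
    using assms by (simp add: minus_div_mult_eq_mod[symmetric] field_simps)
  then show ?thesis by simp
qed

lemma factor_fc:
  assumes q: "q > 0"
  shows "complex_of_real (1 / sqrt (real q ^ (mb * n))) * complex_of_real (1 / sqrt (real q ^ (mb * n)))
      * (\<Sum>x1\<in>zmats mb n q. ee (of_int (- 1 * ip mb n y1 x1) / real q) * (\<Prod>k<mb. \<phi> k (x1 k)))
    = (\<Prod>k<mb. fc q n (\<phi> k) (y1 k))"
proof -
  have c: "complex_of_real (1 / sqrt (real q ^ (mb * n))) * complex_of_real (1 / sqrt (real q ^ (mb * n)))
       = 1 / (of_nat q ^ n) ^ mb"
    using q by (simp flip: of_real_mult power_mult add: mult.commute)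
  have "(\<Prod>k<mb. fc q n (\<phi> k) (y1 k))
      = (\<Prod>k<mb. \<Sum>v\<in>vecs n q. ee (of_int (- dotp n v (y1 k)) / q) * \<phi> k v / of_nat q ^ n)"
    unfolding fc_def by (simp add: sum_divide_distrib)
  also have "\<dots> = (\<Sum>x1\<in>zmats mb n q. \<Prod>k<mb. ee (of_int (- dotp n (x1 k) (y1 k)) / q) * \<phi> k (x1 k) / of_nat q ^ n)"
    unfolding zmats_gvecs by (rule sum_gvecs_prod[symmetric])
  also have "\<dots> = (\<Sum>x1\<in>zmats mb n q. ee (of_int (- 1 * ip mb n y1 x1) / real q) * (\<Prod>k<mb. \<phi> k (x1 k)) / (of_nat q ^ n) ^ mb)"
  proof (rule sum.cong[OF refl])
    fix x1
    have "ee (of_int (- 1 * ip mb n y1 x1) / real q) = (\<Prod>k<mb. ee (of_int (- dotp n (x1 k) (y1 k)) / q))"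
    proof -
      have e: "- 1 * ip mb n y1 x1 = (\<Sum>k<mb. - dotp n (x1 k) (y1 k))"
        by (simp add: ip_def sum_negf dotp_comm)
      show ?thesis by (subst e) (rule ee_div_sum)
    qed
    then show "(\<Prod>k<mb. ee (of_int (- dotp n (x1 k) (y1 k)) / q) * \<phi> k (x1 k) / of_nat q ^ n)
        = ee (of_int (- 1 * ip mb n y1 x1) / real q) * (\<Prod>k<mb. \<phi> k (x1 k)) / (of_nat q ^ n) ^ mb"
      by (simp add: prod.distrib prod_dividef)
  qed
  finally show ?thesis unfolding c by (simp add: sum_divide_distrib)
qed



lemma ee_mod_pow: "ee (of_int (a mod 2 ^ B) / 2 ^ B) = ee (of_int a / 2 ^ B)"
  using ee_mod_int[of "2^B" a] by simp

lemma cvec_zmats: "1 \<le> B \<Longrightarrow> cvec mb nb cols \<in> zmats mb nb (2^B)"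
proof -
  assume "1 \<le> B"
  then have "(2::int)^1 \<le> 2^B" by (intro power_increasing) auto
  then show ?thesis by (auto simp: cvec_def zmats_def)
qed

lemma psi1_at:
  assumes cols: "\<forall>k<mb. cols k < nb"
  shows "U1m n mb nb q B (x1, \<lambda>_ _. 0, z, 0) (x0m mb nb cols)
    = complex_of_real (1 / sqrt (real q ^ (mb * n))) * (complex_of_real (1 / sqrt (real (2^B) ^ (mb * nb)))
       * ee (of_int (\<Sum>k<mb. z k (cols k)) / 2 ^ B))"
  by (simp add: U1m_def x0m_def tensor_def idm_def fourier_def ip_cvec[OF cols])

lemma phase_split:
  assumes cols: "\<forall>k<mb. cols k < nb"
  shows "ee (of_int (\<Sum>k<mb. (\<lambda>i j. if i < mb \<and> j < nb then (y3 i j - frodo_dec n q B S x1 (\<lambda>_ _. 0) i j) mod 2 ^ B else y3 i j) k (cols k)) / 2 ^ B)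
    = (\<Prod>k<mb. ee (of_int (y3 k (cols k)) / 2 ^ B)) * (\<Prod>k<mb. phiS n q B (colv S (cols k)) (x1 k))"
proof -
  have "ee (of_int (\<Sum>k<mb. (\<lambda>i j. if i < mb \<and> j < nb then (y3 i j - frodo_dec n q B S x1 (\<lambda>_ _. 0) i j) mod 2 ^ B else y3 i j) k (cols k)) / 2 ^ B)
     = (\<Prod>k<mb. ee (of_int ((y3 k (cols k) - frodo_dec n q B S x1 (\<lambda>_ _. 0) k (cols k)) mod 2 ^ B) / 2 ^ B))"
    unfolding ee_div_sum using cols by (intro prod.cong refl) simp
  also have "\<dots> = (\<Prod>k<mb. ee (of_int (y3 k (cols k)) / 2 ^ B) * phiS n q B (colv S (cols k)) (x1 k))"
  proof (rule prod.cong[OF refl])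
    fix k
    have "ee (of_int ((y3 k (cols k) - frodo_dec n q B S x1 (\<lambda>_ _. 0) k (cols k)) mod 2 ^ B) / 2 ^ B)
        = ee (of_int (y3 k (cols k)) / 2 ^ B) * ee (- (of_int (frodo_dec n q B S x1 (\<lambda>_ _. 0) k (cols k)) / 2 ^ B))"
      unfolding ee_mod_pow by (simp add: diff_divide_distrib ee_diff)
    also have "ee (- (of_int (frodo_dec n q B S x1 (\<lambda>_ _. 0) k (cols k)) / 2 ^ B)) = phiS n q B (colv S (cols k)) (x1 k)"
      by (simp add: phiS_def frodo_dec_def dotp_def colv_def)
    finally show "ee (of_int ((y3 k (cols k) - frodo_dec n q B S x1 (\<lambda>_ _. 0) k (cols k)) mod 2 ^ B) / 2 ^ B)
       = ee (of_int (y3 k (cols k)) / 2 ^ B) * phiS n q B (colv S (cols k)) (x1 k)" .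
  qed
  finally show ?thesis by (simp add: prod.distrib)
qed



lemma psi3:
  assumes q: "q > 0" and B1: "1 \<le> B" and cols: "\<forall>k<mb. cols k < nb"
    and y1: "y1 \<in> zmats mb n q" and y3: "y3 \<in> zmats mb nb (2^B)"
  shows "final_state n mb nb q B {0} S (x0m mb nb cols) (U1m n mb nb q B) (U2m n mb q) (y1, \<lambda>_ _. 0, y3, 0)
   = complex_of_real (1 / sqrt (real (2^B) ^ (mb*nb))) * (\<Prod>k<mb. ee (of_int (y3 k (cols k)) / 2 ^ B))
     * (\<Prod>k<mb. fc q n (phiS n q B (colv S (cols k))) (y1 k))"
proof -
  let ?D = "qspace n mb nb q B {0}"
  let ?O = "frodo_oracle n mb nb q B S"
  let ?pre = "preim n mb nb q B S"
  let ?c1 = "complex_of_real (1 / sqrt (real q ^ (mb * n)))"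
  let ?c3 = "complex_of_real (1 / sqrt (real (2^B) ^ (mb * nb)))"
  let ?\<Theta> = "\<Prod>k<mb. ee (of_int (y3 k (cols k)) / 2 ^ B)"
  let ?y = "(y1, \<lambda>_ _. 0, y3, 0) :: frodo_basis"
  have fin: "finite ?D" by (simp add: finite_qspace)
  have x0D: "x0m mb nb cols \<in> ?D"
    using q cvec_zmats[OF B1] by (simp add: x0m_def qspace_def)
  define \<psi>1 where "\<psi>1 = (\<lambda>y. U1m n mb nb q B y (x0m mb nb cols))"
  have A1: "apply_op ?D (U1m n mb nb q B) (ket (x0m mb nb cols)) = \<psi>1"
    unfolding \<psi>1_def by (rule apply_ket[OF x0D fin])
  define \<psi>2 where "\<psi>2 = apply_op ?D ?O \<psi>1"
  have A2: "\<psi>2 x = \<psi>1 (?pre x)" if "x \<in> ?D" for x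
    unfolding \<psi>2_def by (rule apply_oracle) (use that in auto)
  have fs: "final_state n mb nb q B {0} S (x0m mb nb cols) (U1m n mb nb q B) (U2m n mb q) ?y
      = (\<Sum>x\<in>?D. U2m n mb q ?y x * \<psi>2 x)"
    by (simp only: final_state_def Let_def A1 flip: \<psi>2_def) (simp only: apply_op_def)
  define E where "E = (\<lambda>x1. (x1, (\<lambda>_ _. 0) :: zmat, y3, 0::nat)) ` zmats mb n q"
  have ED: "E \<subseteq> ?D" using y3 q by (auto simp: E_def qspace_def)
  have "(\<Sum>x\<in>?D. U2m n mb q ?y x * \<psi>2 x) = (\<Sum>x\<in>E. U2m n mb q ?y x * \<psi>2 x)"
  proof (rule sum.mono_neutral_right[OF fin ED], intro ballI)
    fix x assume x: "x \<in> ?D - E"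
    obtain x1 x2 x3 xw where xe: "x = (x1, x2, x3, xw)" by (cases x) auto
    have "x1 \<in> zmats mb n q" using x by (auto simp: xe qspace_def)
    then have "\<not> (x2 = (\<lambda>_ _. 0) \<and> x3 = y3 \<and> xw = 0)" using x by (auto simp: xe E_def)
    then have "U2m n mb q ?y x = 0" by (auto simp: U2m_def tensor_def idm_def xe)
    then show "U2m n mb q ?y x * \<psi>2 x = 0" by simp
  qed
  also have "\<dots> = (\<Sum>x1\<in>zmats mb n q. U2m n mb q ?y (x1, \<lambda>_ _. 0, y3, 0) * \<psi>2 (x1, \<lambda>_ _. 0, y3, 0))"
    unfolding E_def by (rule sum.reindex[unfolded comp_def]) (auto intro: inj_onI)
  also have "\<dots> = (\<Sum>x1\<in>zmats mb n q. ?c3 * ?\<Theta> * (?c1 * ?c1 * (ee (of_int (- 1 * ip mb n y1 x1) / real q) * (\<Prod>k<mb. phiS n q B (colv S (cols k)) (x1 k)))))"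
  proof (rule sum.cong[OF refl])
    fix x1 assume x1: "x1 \<in> zmats mb n q"
    have inD: "(x1, (\<lambda>_ _. 0) :: zmat, y3, 0::nat) \<in> ?D" using x1 y3 q by (auto simp: qspace_def)
    have u2: "U2m n mb q ?y (x1, \<lambda>_ _. 0, y3, 0) = ?c1 * ee (of_int (- 1 * ip mb n y1 x1) / real q)"
      by (simp add: U2m_def tensor_def idm_def fourier_def)
    have "\<psi>2 (x1, \<lambda>_ _. 0, y3, 0) = \<psi>1 (?pre (x1, \<lambda>_ _. 0, y3, 0))" by (rule A2[OF inD])
    also have "\<dots> = ?c1 * (?c3 * (?\<Theta> * (\<Prod>k<mb. phiS n q B (colv S (cols k)) (x1 k))))"
    proof -
      define z' where "z' = (\<lambda>i j. if i < mb \<and> j < nb then (y3 i j - frodo_dec n q B S x1 (\<lambda>_ _. 0) i j) mod 2 ^ B else y3 i j)"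
      have pe: "?pre (x1, \<lambda>_ _. 0, y3, 0) = (x1, \<lambda>_ _. 0, z', 0)" by (simp add: preim_def z'_def)
      show ?thesis unfolding \<psi>1_def pe psi1_at[OF cols] unfolding z'_def phase_split[OF cols] ..
    qed
    finally show "U2m n mb q ?y (x1, \<lambda>_ _. 0, y3, 0) * \<psi>2 (x1, \<lambda>_ _. 0, y3, 0)
       = ?c3 * ?\<Theta> * (?c1 * ?c1 * (ee (of_int (- 1 * ip mb n y1 x1) / real q) * (\<Prod>k<mb. phiS n q B (colv S (cols k)) (x1 k))))"
      unfolding u2 by (simp add: mult_ac)
  qed
  also have "\<dots> = ?c3 * ?\<Theta> * (?c1 * ?c1 * (\<Sum>x1\<in>zmats mb n q. ee (of_int (- 1 * ip mb n y1 x1) / real q) * (\<Prod>k<mb. phiS n q B (colv S (cols k)) (x1 k))))"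
    by (simp add: sum_distrib_left)
  also have "\<dots> = ?c3 * ?\<Theta> * (\<Prod>k<mb. fc q n (phiS n q B (colv S (cols k))) (y1 k))"
    by (subst factor_fc[OF q]) (rule refl)
  finally show ?thesis unfolding fs .
qed



lemma colv_vecs:
  assumes "S \<in> zmats n nb q" "c < nb"
  shows "colv S c \<in> vecs n q"
  using assms by (auto simp: colv_def vecs_def gvecs_def zmats_def)

lemma Y1_eq:
  assumes S: "S \<in> zmats n nb q" and c: "c < nb" and k: "k < mb"
  shows "{y1 \<in> zmats mb n q. \<forall>i<n. y1 k i = S i c}
       = gvecs mb (\<lambda>k'. if k' = k then {colv S c} else vecs n q) (\<lambda>_. 0)"
proof (rule set_eqI)
  fix y1
  have cv: "colv S c \<in> vecs n q" by (rule colv_vecs[OF S c])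
  show "y1 \<in> {y1 \<in> zmats mb n q. \<forall>i<n. y1 k i = S i c} \<longleftrightarrow> y1 \<in> gvecs mb (\<lambda>k'. if k' = k then {colv S c} else vecs n q) (\<lambda>_. 0)"
  proof
    assume H: "y1 \<in> {y1 \<in> zmats mb n q. \<forall>i<n. y1 k i = S i c}"
    then have g: "y1 \<in> gvecs mb (\<lambda>_. vecs n q) (\<lambda>_. 0)" by (simp add: zmats_gvecs)
    have "y1 k = colv S c"
    proof
      fix i show "y1 k i = colv S c i"
      proof (cases "i < n")
        case True then show ?thesis using H by (simp add: colv_def)
      next
        case False
        have "y1 k \<in> vecs n q" using g k by (simp add: gvecs_def)
        then show ?thesis using False cv by (simp add: vecs_def gvecs_def)
      qed
    qed
    then show "y1 \<in> gvecs mb (\<lambda>k'. if k' = k then {colv S c} else vecs n q) (\<lambda>_. 0)"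
      using g unfolding gvecs_def mem_Collect_eq by (metis singletonI)
  next
    assume H: "y1 \<in> gvecs mb (\<lambda>k'. if k' = k then {colv S c} else vecs n q) (\<lambda>_. 0)"
    have yk: "y1 k = colv S c" using H k unfolding gvecs_def mem_Collect_eq by (metis singletonD)
    have "y1 \<in> gvecs mb (\<lambda>_. vecs n q) (\<lambda>_. 0)"
      unfolding gvecs_def mem_Collect_eq
    proof (intro allI conjI impI)
      fix i assume i: "i < mb"
      show "y1 i \<in> vecs n q"
      proof (cases "i = k")
        case True then show ?thesis using yk cv by simp
      next
        case False then show ?thesis using H i unfolding gvecs_def by auto
      qed
    next
      fix i assume "\<not> i < mb" then show "y1 i = (\<lambda>_. 0)" using H unfolding gvecs_def by auto
    qed
    with yk show "y1 \<in> {y1 \<in> zmats mb n q. \<forall>i<n. y1 k i = S i c}"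
      by (simp add: zmats_gvecs colv_def)
  qed
qed

lemma norm_phiS[simp]: "norm (phiS n q B s v) = 1"
  by (simp add: phiS_def)

lemma main_bound:
  assumes q: "q = 2 ^ D" and B1: "1 \<le> B" and BD: "B \<le> D" and cols: "\<forall>k<mb. cols k < nb"
    and S: "S \<in> zmats n nb q" and k: "k < mb" and i0: "i0 < n" and odd: "odd (S i0 (cols k))"
  shows "4 / pi\<^sup>2 \<le> meas_prob (qspace n mb nb q B {0})
     (final_state n mb nb q B {0} S (x0m mb nb cols) (U1m n mb nb q B) (U2m n mb q))
     (\<lambda>x. \<forall>i<n. fst x k i = S i (cols k))"
proof -
  have qpos: "q > 0" using q by simp
  let ?D = "qspace n mb nb q B {0}"
  let ?\<psi> = "final_state n mb nb q B {0} S (x0m mb nb cols) (U1m n mb nb q B) (U2m n mb q)"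
  let ?P = "\<lambda>x::frodo_basis. \<forall>i<n. fst x k i = S i (cols k)"
  let ?Y1 = "{y1 \<in> zmats mb n q. \<forall>i<n. y1 k i = S i (cols k)}"
  let ?Z3 = "zmats mb nb (2^B)"
  let ?f = "\<lambda>(y1, y3). (y1, (\<lambda>_ _. 0) :: zmat, y3, 0::nat)"
  let ?T = "?f ` (?Y1 \<times> ?Z3)"
  let ?c3 = "1 / sqrt (real (2^B) ^ (mb*nb))"
  let ?g = "\<lambda>k' v. (cmod (fc q n (phiS n q B (colv S (cols k'))) v))\<^sup>2"
  have fin: "finite ?D" by (simp add: finite_qspace)
  have TD: "?T \<subseteq> {x \<in> ?D. ?P x}" using qpos by (auto simp: qspace_def)
  have "(\<Sum>x\<in>?T. (cmod (?\<psi> x))\<^sup>2) \<le> meas_prob ?D ?\<psi> ?P"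
    unfolding meas_prob_def by (rule sum_mono2) (use fin TD in auto)
  moreover have "(\<Sum>x\<in>?T. (cmod (?\<psi> x))\<^sup>2) = (\<Sum>(y1,y3)\<in>?Y1 \<times> ?Z3. (cmod (?\<psi> (y1, \<lambda>_ _. 0, y3, 0)))\<^sup>2)"
    by (subst sum.reindex) (auto intro!: inj_onI simp: case_prod_beta)
  moreover have "\<dots> = (\<Sum>y1\<in>?Y1. \<Sum>y3\<in>?Z3. ?c3\<^sup>2 * (\<Prod>k'<mb. ?g k' (y1 k')))"
  proof -
    have "(cmod (?\<psi> (y1, \<lambda>_ _. 0, y3, 0)))\<^sup>2 = ?c3\<^sup>2 * (\<Prod>k'<mb. ?g k' (y1 k'))"
      if "y1 \<in> ?Y1" "y3 \<in> ?Z3" for y1 y3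
    proof -
      have "cmod (?\<psi> (y1, \<lambda>_ _. 0, y3, 0)) = ?c3 * (\<Prod>k'<mb. cmod (fc q n (phiS n q B (colv S (cols k'))) (y1 k')))"
      proof -
        have e: "?\<psi> (y1, \<lambda>_ _. 0, y3, 0) = complex_of_real ?c3 * (\<Prod>k<mb. ee (of_int (y3 k (cols k)) / 2 ^ B))
              * (\<Prod>k<mb. fc q n (phiS n q B (colv S (cols k))) (y1 k))"
          by (rule psi3[OF qpos B1 cols]) (use that in auto)
        have t: "cmod (\<Prod>k<mb. ee (of_int (y3 k (cols k)) / 2 ^ B)) = 1"
          by (simp add: prod_norm[symmetric])
        have c: "cmod (complex_of_real ?c3) = ?c3" unfolding norm_of_real by simp
        show ?thesis unfolding e norm_mult t prod_norm[symmetric] c by simp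
      qed
      then show ?thesis by (simp add: power_divide prod_power_distrib)
    qed
    then show ?thesis by (simp add: sum.cartesian_product[symmetric])
  qed
  moreover have "\<dots> = (\<Sum>y1\<in>?Y1. \<Prod>k'<mb. ?g k' (y1 k'))"
  proof -
    have "real (card ?Z3) * ?c3\<^sup>2 = 1"
      by (simp add: card_zmats power2_eq_square flip: real_sqrt_mult)
    then show ?thesis by (simp add: mult.assoc[symmetric])
  qed
  moreover have "\<dots> = (\<Prod>k'<mb. \<Sum>v\<in>(if k' = k then {colv S (cols k)} else vecs n q). ?g k' v)"
    unfolding Y1_eq[OF S cols[rule_format, OF k] k] by (rule sum_gvecs_prod)
  moreover have "\<dots> = (\<Prod>k'<mb. if k' = k then ?g k (colv S (cols k)) else 1)"
    by (rule prod.cong[OF refl]) (auto simp: parseval[OF qpos])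
  moreover have "\<dots> = ?g k (colv S (cols k))" using k by simp
  moreover have "4 / pi\<^sup>2 \<le> ?g k (colv S (cols k))"
    by (rule core[OF q B1 BD colv_vecs[OF S cols[rule_format, OF k]] i0]) (simp add: colv_def odd)
  ultimately show ?thesis by linarith
qed


theorem theorem10:
  fixes n mb nb q B D :: nat and cols :: "nat \<Rightarrow> nat"
  assumes "q = 2 ^ D" and "1 \<le> D" and "1 \<le> B" and "B \<le> D"
    and "inj_on cols {..<mb}" and "cols ` {..<mb} \<subseteq> {..<nb}"
  shows "\<exists>(W :: nat set) (x0 :: frodo_basis) U1 U2 (out :: frodo_basis \<Rightarrow> nat \<Rightarrow> nat \<Rightarrow> int).
     finite W \<and> x0 \<in> qspace n mb nb q B W
     \<and> unitary_on (qspace n mb nb q B W) U1 \<and> unitary_on (qspace n mb nb q B W) U2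
     \<and> (\<forall>S \<in> zmats n nb q. \<forall>k < mb. (\<exists>i < n. odd (S i (cols k))) \<longrightarrow>
          meas_prob (qspace n mb nb q B W) (final_state n mb nb q B W S x0 U1 U2)
             (\<lambda>x. \<forall>i < n. out x k i = S i (cols k)) \<ge> 4 / pi\<^sup>2)"
proof -
  have cols: "\<forall>k<mb. cols k < nb" using assms(6) by auto
  have qpos: "q > 0" using assms(1) by simp
  have x0D: "x0m mb nb cols \<in> qspace n mb nb q B {0}"
    using qpos cvec_zmats[OF assms(3)] by (simp add: x0m_def qspace_def)
  have u1: "unitary_on (qspace n mb nb q B {0}) (U1m n mb nb q B)"
    unfolding qspace_def U1m_def
    by (intro unitary_tensor unitary_fourier unitary_idm qpos) auto
  have u2: "unitary_on (qspace n mb nb q B {0}) (U2m n mb q)"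
    unfolding qspace_def U2m_def
    by (intro unitary_tensor unitary_fourier unitary_idm qpos) auto
  have mb: "\<forall>S \<in> zmats n nb q. \<forall>k < mb. (\<exists>i < n. odd (S i (cols k))) \<longrightarrow>
          meas_prob (qspace n mb nb q B {0}) (final_state n mb nb q B {0} S (x0m mb nb cols) (U1m n mb nb q B) (U2m n mb q))
             (\<lambda>x. \<forall>i < n. fst x k i = S i (cols k)) \<ge> 4 / pi\<^sup>2"
  proof (intro ballI allI impI)
    fix S k assume S: "S \<in> zmats n nb q" and k: "k < mb" and "\<exists>i<n. odd (S i (cols k))"
    then obtain i0 where "i0 < n" "odd (S i0 (cols k))" by blast
    then show "4 / pi\<^sup>2 \<le> meas_prob (qspace n mb nb q B {0}) (final_state n mb nb q B {0} S (x0m mb nb cols) (U1m n mb nb q B) (U2m n mb q))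
             (\<lambda>x. \<forall>i < n. fst x k i = S i (cols k))"
      using main_bound[OF assms(1) assms(3) assms(4) cols S k] by blast
  qed
  show ?thesis
    by (rule exI[where x="{0}"], rule exI[where x="x0m mb nb cols"], rule exI[where x="U1m n mb nb q B"],
        rule exI[where x="U2m n mb q"], rule exI[where x="\<lambda>x k i. fst x k i"])
       (use x0D u1 u2 mb in simp)
qed

end
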